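(* Let $J$ be a real semi-simple Jordan algebra of dimension $n\ge2$ with unit $e$, let $\mathcal Y$ be the connected component of $e$ in the set of invertible elements, $\omega(y)=\sqrt{|\det P_y|}$ on $\mathcal Y$, and let $\gamma=-n^{-1}g$, where $g(x,y)=\mathrm{tr}\,L_{x\bullet y}$. Let $\Delta$ be the kernel of the 1-form $\zeta$ on $\mathcal Y$ given at $x$ by $\zeta(u)=-\gamma(u,x^{-1})$. Then the maximal integral manifolds of $\Delta$ are the level surfaces $\omega_c=\{x\in\mathcal Y:\omega(x)=c\}$, $c>0$.
   Context: Real Jordan algebra: commutative bilinear product with $x\bullet(x^2\bullet y)=x^2\bullet(x\bullet y)$; $L_xy=x\bullet y$; $P_x=2L_x^2-L_{x^2}$; $x$ invertible iff $\det P_x\ne0$, $x^{-1}=P_x^{-1}x$; semi-simple iff $g$ is non-degenerate (such algebras are unital; $-n^{-1}g$ is then a non-degenerate trace form with value $-1$ at $(e,e)$). *)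

theory Defs
  imports "HOL-Analysis.Analysis"
begin

text \<open>A real Jordan algebra of dimension n = CARD('n) is modelled as real^'n with a
  bilinear product mul.\<close>

definition jordan_algebra :: "(real^'n \<Rightarrow> real^'n \<Rightarrow> real^'n) \<Rightarrow> bool" where
  "jordan_algebra mul \<longleftrightarrow> bilinear mul \<and> (\<forall>x y. mul x y = mul y x) \<and>
     (\<forall>x y. mul x (mul (mul x x) y) = mul (mul x x) (mul x y))"

definition Lop :: "(real^'n \<Rightarrow> real^'n \<Rightarrow> real^'n) \<Rightarrow> real^'n \<Rightarrow> real^'n \<Rightarrow> real^'n" where
  "Lop mul x = (\<lambda>y. mul x y)"

definition Pop :: "(real^'n \<Rightarrow> real^'n \<Rightarrow> real^'n) \<Rightarrow> real^'n \<Rightarrow> real^'n \<Rightarrow> real^'n" where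
  "Pop mul x = (\<lambda>y. 2 *\<^sub>R Lop mul x (Lop mul x y) - Lop mul (mul x x) y)"

definition jinvertible :: "(real^'n \<Rightarrow> real^'n \<Rightarrow> real^'n) \<Rightarrow> real^'n \<Rightarrow> bool" where
  "jinvertible mul x \<longleftrightarrow> det (matrix (Pop mul x)) \<noteq> 0"

definition jinv :: "(real^'n \<Rightarrow> real^'n \<Rightarrow> real^'n) \<Rightarrow> real^'n \<Rightarrow> real^'n" where
  "jinv mul x = matrix_inv (matrix (Pop mul x)) *v x"

definition gform :: "(real^'n \<Rightarrow> real^'n \<Rightarrow> real^'n) \<Rightarrow> real^'n \<Rightarrow> real^'n \<Rightarrow> real" where
  "gform mul x y = trace (matrix (Lop mul (mul x y)))"

definition semisimple :: "(real^'n \<Rightarrow> real^'n \<Rightarrow> real^'n) \<Rightarrow> bool" where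
  "semisimple mul \<longleftrightarrow> (\<forall>x. (\<forall>y. gform mul x y = 0) \<longrightarrow> x = 0)"

definition gamma_form :: "(real^'n \<Rightarrow> real^'n \<Rightarrow> real^'n) \<Rightarrow> real^'n \<Rightarrow> real^'n \<Rightarrow> real" where
  "gamma_form mul x y = - (1 / real CARD('n)) * gform mul x y"

definition Ycomp :: "(real^'n \<Rightarrow> real^'n \<Rightarrow> real^'n) \<Rightarrow> real^'n \<Rightarrow> (real^'n) set" where
  "Ycomp mul e = connected_component_set {x. jinvertible mul x} e"

definition omega :: "(real^'n \<Rightarrow> real^'n \<Rightarrow> real^'n) \<Rightarrow> real^'n \<Rightarrow> real" where
  "omega mul y = sqrt \<bar>det (matrix (Pop mul y))\<bar>"

definition zeta :: "(real^'n \<Rightarrow> real^'n \<Rightarrow> real^'n) \<Rightarrow> real^'n \<Rightarrow> real^'n \<Rightarrow> real" where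
  "zeta mul x u = - gamma_form mul u (jinv mul x)"

definition Delta :: "(real^'n \<Rightarrow> real^'n \<Rightarrow> real^'n) \<Rightarrow> real^'n \<Rightarrow> (real^'n) set" where
  "Delta mul x = {u. zeta mul x u = 0}"

text \<open>Integral manifold of a codimension-one (hyperplane) distribution D on an ambient
  set M: a nonempty connected subset of M which is locally the regular zero set of a
  C^1 function whose differential at the point has kernel D p (embedded C^1 hypersurface
  with tangent space D p at each point p).\<close>
definition integral_manifold ::
  "('a::euclidean_space \<Rightarrow> 'a set) \<Rightarrow> 'a set \<Rightarrow> 'a set \<Rightarrow> bool" where
  "integral_manifold D M S \<longleftrightarrow> S \<noteq> {} \<and> connected S \<and> S \<subseteq> M \<and>
     (\<forall>p\<in>S. \<exists>U f f'. open U \<and> p \<in> U \<and> U \<subseteq> M \<and>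
        (\<forall>x\<in>U. (f has_derivative blinfun_apply (f' x)) (at x)) \<and>
        continuous_on U (f' :: 'a \<Rightarrow> 'a \<Rightarrow>\<^sub>L real) \<and>
        blinfun_apply (f' p) \<noteq> (\<lambda>u. 0) \<and>
        S \<inter> U = {x\<in>U. f x = 0} \<and>
        {u. blinfun_apply (f' p) u = 0} = D p)"

definition maximal_integral_manifold ::
  "('a::euclidean_space \<Rightarrow> 'a set) \<Rightarrow> 'a set \<Rightarrow> 'a set \<Rightarrow> bool" where
  "maximal_integral_manifold D M S \<longleftrightarrow> integral_manifold D M S \<and>
     (\<forall>S'. integral_manifold D M S' \<and> S \<subseteq> S' \<longrightarrow> S' = S)"

end

theory Submission
  imports Defs
begin


locale jalg =
  fixes mul :: "real^'n \<Rightarrow> real^'n \<Rightarrow> real^'n"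
  assumes bil: "bilinear mul"
    and mc: "\<And>a b. mul a b = mul b a"
    and jid: "\<And>x y. mul x (mul (mul x x) y) = mul (mul x x) (mul x y)"
begin

lemma ml_add: "mul (a + b) c = mul a c + mul b c" using bilinear_ladd[OF bil] .
lemma mr_add: "mul a (b + c) = mul a b + mul a c" using bilinear_radd[OF bil] .
lemma ml_sub: "mul (a - b) c = mul a c - mul b c" using bilinear_lsub[OF bil] .
lemma mr_sub: "mul a (b - c) = mul a b - mul a c" using bilinear_rsub[OF bil] .
lemma ml_neg: "mul (- a) c = - mul a c" using bilinear_lneg[OF bil] .
lemma mr_neg: "mul a (- c) = - mul a c" using bilinear_rneg[OF bil] .
lemma ml_scale: "mul (r *\<^sub>R a) c = r *\<^sub>R mul a c" using bilinear_lmul[OF bil] .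
lemma mr_scale: "mul a (r *\<^sub>R c) = r *\<^sub>R mul a c" using bilinear_rmul[OF bil] .
lemma ml_zero: "mul 0 c = 0" using bilinear_lzero[OF bil] .
lemma mr_zero: "mul a 0 = 0" using bilinear_rzero[OF bil] .

lemmas mexp = ml_add mr_add ml_sub mr_sub ml_neg mr_neg ml_scale mr_scale ml_zero mr_zero

definition jf :: "real^'n \<Rightarrow> real^'n \<Rightarrow> real^'n" where
  "jf x y = mul x (mul (mul x x) y) - mul (mul x x) (mul x y)"

lemma jf0: "jf x y = 0" by (simp add: jf_def jid)

lemma jlin0:
  "jf (a+b+c) d - jf (a+b) d - jf (a+c) d - jf (b+c) d + jf a d + jf b d + jf c d
   = 2 *\<^sub>R ((mul a (mul (mul b c) d) + mul b (mul (mul a c) d) + mul c (mul (mul a b) d))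
     - (mul (mul b c) (mul a d) + mul (mul a c) (mul b d) + mul (mul a b) (mul c d)))"
  unfolding jf_def
  apply (simp only: mexp)
  apply (simp add: mc)
  apply (simp add: vec_eq_iff)
  done

lemma jlin: "mul a (mul (mul b c) d) + mul b (mul (mul a c) d) + mul c (mul (mul a b) d)
     = mul (mul b c) (mul a d) + mul (mul a c) (mul b d) + mul (mul a b) (mul c d)"
  using jlin0[of a b c d] by (simp add: jf0)
definition Uop :: "real^'n \<Rightarrow> real^'n \<Rightarrow> real^'n" where
  "Uop x v = 2 *\<^sub>R mul x (mul x v) - mul (mul x x) v"
definition U2 :: "real^'n \<Rightarrow> real^'n \<Rightarrow> real^'n \<Rightarrow> real^'n" where
  "U2 a b v = 2 *\<^sub>R (mul a (mul b v) + mul b (mul a v) - mul (mul a b) v)"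

lemma deriv_id: "mul (mul a (mul c b) - mul c (mul a b)) z = mul a (mul c (mul b z)) - mul c (mul a (mul b z)) - mul b (mul a (mul c z)) + mul b (mul c (mul a z))"
proof -
  have h0: "mul (z) (mul (mul (c) (b)) (a)) + mul (c) (mul (mul (z) (b)) (a)) + mul (b) (mul (mul (z) (c)) (a)) = mul (mul (c) (b)) (mul (z) (a)) + mul (mul (z) (b)) (mul (c) (a)) + mul (mul (z) (c)) (mul (b) (a))" by (rule jlin)
  have z0: "((mul (z) (mul (mul (c) (b)) (a)) + mul (c) (mul (mul (z) (b)) (a)) + mul (b) (mul (mul (z) (c)) (a))) - (mul (mul (c) (b)) (mul (z) (a)) + mul (mul (z) (b)) (mul (c) (a)) + mul (mul (z) (c)) (mul (b) (a)))) = 0" using h0 by simp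
  have h1: "mul (z) (mul (mul (b) (a)) (c)) + mul (b) (mul (mul (z) (a)) (c)) + mul (a) (mul (mul (z) (b)) (c)) = mul (mul (b) (a)) (mul (z) (c)) + mul (mul (z) (a)) (mul (b) (c)) + mul (mul (z) (b)) (mul (a) (c))" by (rule jlin)
  have z1: "((mul (z) (mul (mul (b) (a)) (c)) + mul (b) (mul (mul (z) (a)) (c)) + mul (a) (mul (mul (z) (b)) (c))) - (mul (mul (b) (a)) (mul (z) (c)) + mul (mul (z) (a)) (mul (b) (c)) + mul (mul (z) (b)) (mul (a) (c)))) = 0" using h1 by simp
  have key: "(1::real) *\<^sub>R ((mul (mul a (mul c b) - mul c (mul a b)) z) - (mul a (mul c (mul b z)) - mul c (mul a (mul b z)) - mul b (mul a (mul c z)) + mul b (mul c (mul a z)))) = (1::real) *\<^sub>R ((mul (z) (mul (mul (c) (b)) (a)) + mul (c) (mul (mul (z) (b)) (a)) + mul (b) (mul (mul (z) (c)) (a))) - (mul (mul (c) (b)) (mul (z) (a)) + mul (mul (z) (b)) (mul (c) (a)) + mul (mul (z) (c)) (mul (b) (a)))) + (-1::real) *\<^sub>R ((mul (z) (mul (mul (b) (a)) (c)) + mul (b) (mul (mul (z) (a)) (c)) + mul (a) (mul (mul (z) (b)) (c))) - (mul (mul (b) (a)) (mul (z) (c)) + mul (mul (z) (a)) (mul (b) (c)) + mul (mul (z) (b)) (mul (a) (c))))"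
    by (simp only: mexp, (simp add: mc)?, (simp add: vec_eq_iff)?)
  have "(1::real) *\<^sub>R ((mul (mul a (mul c b) - mul c (mul a b)) z) - (mul a (mul c (mul b z)) - mul c (mul a (mul b z)) - mul b (mul a (mul c z)) + mul b (mul c (mul a z)))) = 0" unfolding key z0 z1 by simp
  then show ?thesis by simp
qed

lemma fund_id: "U2 x (Uop x y) z = Uop x (U2 y z x)"
proof -
  have h0: "mul (z) (mul (mul (y) (x)) (mul (x) (x))) + mul (y) (mul (mul (z) (x)) (mul (x) (x))) + mul (x) (mul (mul (z) (y)) (mul (x) (x))) = mul (mul (y) (x)) (mul (z) (mul (x) (x))) + mul (mul (z) (x)) (mul (y) (mul (x) (x))) + mul (mul (z) (y)) (mul (x) (mul (x) (x)))" by (rule jlin)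
  have z0: "((mul (z) (mul (mul (y) (x)) (mul (x) (x))) + mul (y) (mul (mul (z) (x)) (mul (x) (x))) + mul (x) (mul (mul (z) (y)) (mul (x) (x)))) - (mul (mul (y) (x)) (mul (z) (mul (x) (x))) + mul (mul (z) (x)) (mul (y) (mul (x) (x))) + mul (mul (z) (y)) (mul (x) (mul (x) (x))))) = 0" using h0 by simp
  have h1: "mul (z) (mul (mul (x) (x)) (mul (x) (y))) + mul (x) (mul (mul (z) (x)) (mul (x) (y))) + mul (x) (mul (mul (z) (x)) (mul (x) (y))) = mul (mul (x) (x)) (mul (z) (mul (x) (y))) + mul (mul (z) (x)) (mul (x) (mul (x) (y))) + mul (mul (z) (x)) (mul (x) (mul (x) (y)))" by (rule jlin)
  have z1: "((mul (z) (mul (mul (x) (x)) (mul (x) (y))) + mul (x) (mul (mul (z) (x)) (mul (x) (y))) + mul (x) (mul (mul (z) (x)) (mul (x) (y)))) - (mul (mul (x) (x)) (mul (z) (mul (x) (y))) + mul (mul (z) (x)) (mul (x) (mul (x) (y))) + mul (mul (z) (x)) (mul (x) (mul (x) (y))))) = 0" using h1 by simp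
  have h2: "mul (z) (mul (mul (x) (mul (x) (y))) (x)) + mul (x) (mul (mul (z) (mul (x) (y))) (x)) + mul (mul (x) (y)) (mul (mul (z) (x)) (x)) = mul (mul (x) (mul (x) (y))) (mul (z) (x)) + mul (mul (z) (mul (x) (y))) (mul (x) (x)) + mul (mul (z) (x)) (mul (mul (x) (y)) (x))" by (rule jlin)
  have z2: "((mul (z) (mul (mul (x) (mul (x) (y))) (x)) + mul (x) (mul (mul (z) (mul (x) (y))) (x)) + mul (mul (x) (y)) (mul (mul (z) (x)) (x))) - (mul (mul (x) (mul (x) (y))) (mul (z) (x)) + mul (mul (z) (mul (x) (y))) (mul (x) (x)) + mul (mul (z) (x)) (mul (mul (x) (y)) (x)))) = 0" using h2 by simp
  have h3: "mul (y) (mul (mul (x) (x)) (mul (x) (z))) + mul (x) (mul (mul (y) (x)) (mul (x) (z))) + mul (x) (mul (mul (y) (x)) (mul (x) (z))) = mul (mul (x) (x)) (mul (y) (mul (x) (z))) + mul (mul (y) (x)) (mul (x) (mul (x) (z))) + mul (mul (y) (x)) (mul (x) (mul (x) (z)))" by (rule jlin)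
  have z3: "((mul (y) (mul (mul (x) (x)) (mul (x) (z))) + mul (x) (mul (mul (y) (x)) (mul (x) (z))) + mul (x) (mul (mul (y) (x)) (mul (x) (z)))) - (mul (mul (x) (x)) (mul (y) (mul (x) (z))) + mul (mul (y) (x)) (mul (x) (mul (x) (z))) + mul (mul (y) (x)) (mul (x) (mul (x) (z))))) = 0" using h3 by simp
  have h4: "mul (y) (mul (mul (x) (mul (x) (z))) (x)) + mul (x) (mul (mul (y) (mul (x) (z))) (x)) + mul (mul (x) (z)) (mul (mul (y) (x)) (x)) = mul (mul (x) (mul (x) (z))) (mul (y) (x)) + mul (mul (y) (mul (x) (z))) (mul (x) (x)) + mul (mul (y) (x)) (mul (mul (x) (z)) (x))" by (rule jlin)
  have z4: "((mul (y) (mul (mul (x) (mul (x) (z))) (x)) + mul (x) (mul (mul (y) (mul (x) (z))) (x)) + mul (mul (x) (z)) (mul (mul (y) (x)) (x))) - (mul (mul (x) (mul (x) (z))) (mul (y) (x)) + mul (mul (y) (mul (x) (z))) (mul (x) (x)) + mul (mul (y) (x)) (mul (mul (x) (z)) (x)))) = 0" using h4 by simp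
  have h5: "mul (y) (mul (mul (x) (mul (x) (x))) (z)) + mul (x) (mul (mul (y) (mul (x) (x))) (z)) + mul (mul (x) (x)) (mul (mul (y) (x)) (z)) = mul (mul (x) (mul (x) (x))) (mul (y) (z)) + mul (mul (y) (mul (x) (x))) (mul (x) (z)) + mul (mul (y) (x)) (mul (mul (x) (x)) (z))" by (rule jlin)
  have z5: "((mul (y) (mul (mul (x) (mul (x) (x))) (z)) + mul (x) (mul (mul (y) (mul (x) (x))) (z)) + mul (mul (x) (x)) (mul (mul (y) (x)) (z))) - (mul (mul (x) (mul (x) (x))) (mul (y) (z)) + mul (mul (y) (mul (x) (x))) (mul (x) (z)) + mul (mul (y) (x)) (mul (mul (x) (x)) (z)))) = 0" using h5 by simp
  have h6: "mul (mul (y) (z)) (mul (mul (x) (x)) (x)) + mul (x) (mul (mul (mul (y) (z)) (x)) (x)) + mul (x) (mul (mul (mul (y) (z)) (x)) (x)) = mul (mul (x) (x)) (mul (mul (y) (z)) (x)) + mul (mul (mul (y) (z)) (x)) (mul (x) (x)) + mul (mul (mul (y) (z)) (x)) (mul (x) (x))" by (rule jlin)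
  have z6: "((mul (mul (y) (z)) (mul (mul (x) (x)) (x)) + mul (x) (mul (mul (mul (y) (z)) (x)) (x)) + mul (x) (mul (mul (mul (y) (z)) (x)) (x))) - (mul (mul (x) (x)) (mul (mul (y) (z)) (x)) + mul (mul (mul (y) (z)) (x)) (mul (x) (x)) + mul (mul (mul (y) (z)) (x)) (mul (x) (x)))) = 0" using h6 by simp
  have h7: "mul (x) (mul (mul (x) (x)) (mul (y) (z))) + mul (x) (mul (mul (x) (x)) (mul (y) (z))) + mul (x) (mul (mul (x) (x)) (mul (y) (z))) = mul (mul (x) (x)) (mul (x) (mul (y) (z))) + mul (mul (x) (x)) (mul (x) (mul (y) (z))) + mul (mul (x) (x)) (mul (x) (mul (y) (z)))" by (rule jlin)
  have z7: "((mul (x) (mul (mul (x) (x)) (mul (y) (z))) + mul (x) (mul (mul (x) (x)) (mul (y) (z))) + mul (x) (mul (mul (x) (x)) (mul (y) (z)))) - (mul (mul (x) (x)) (mul (x) (mul (y) (z))) + mul (mul (x) (x)) (mul (x) (mul (y) (z))) + mul (mul (x) (x)) (mul (x) (mul (y) (z))))) = 0" using h7 by simp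
  have h8: "mul (x) (mul (mul (x) (mul (x) (y))) (z)) + mul (x) (mul (mul (x) (mul (x) (y))) (z)) + mul (mul (x) (y)) (mul (mul (x) (x)) (z)) = mul (mul (x) (mul (x) (y))) (mul (x) (z)) + mul (mul (x) (mul (x) (y))) (mul (x) (z)) + mul (mul (x) (x)) (mul (mul (x) (y)) (z))" by (rule jlin)
  have z8: "((mul (x) (mul (mul (x) (mul (x) (y))) (z)) + mul (x) (mul (mul (x) (mul (x) (y))) (z)) + mul (mul (x) (y)) (mul (mul (x) (x)) (z))) - (mul (mul (x) (mul (x) (y))) (mul (x) (z)) + mul (mul (x) (mul (x) (y))) (mul (x) (z)) + mul (mul (x) (x)) (mul (mul (x) (y)) (z)))) = 0" using h8 by simp
  have h9: "mul (z) (mul (x) (mul (mul (x) (x)) (y)) + mul (x) (mul (mul (x) (x)) (y)) + mul (x) (mul (mul (x) (x)) (y))) = mul (z) (mul (mul (x) (x)) (mul (x) (y)) + mul (mul (x) (x)) (mul (x) (y)) + mul (mul (x) (x)) (mul (x) (y)))" by (rule arg_cong[where f="mul (z)"], rule jlin)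
  have z9: "(mul (z) (mul (x) (mul (mul (x) (x)) (y)) + mul (x) (mul (mul (x) (x)) (y)) + mul (x) (mul (mul (x) (x)) (y))) - mul (z) (mul (mul (x) (x)) (mul (x) (y)) + mul (mul (x) (x)) (mul (x) (y)) + mul (mul (x) (x)) (mul (x) (y)))) = 0" using h9 by simp
  have h10: "mul (y) (mul (z) (mul (mul (x) (x)) (x)) + mul (x) (mul (mul (z) (x)) (x)) + mul (x) (mul (mul (z) (x)) (x))) = mul (y) (mul (mul (x) (x)) (mul (z) (x)) + mul (mul (z) (x)) (mul (x) (x)) + mul (mul (z) (x)) (mul (x) (x)))" by (rule arg_cong[where f="mul (y)"], rule jlin)
  have z10: "(mul (y) (mul (z) (mul (mul (x) (x)) (x)) + mul (x) (mul (mul (z) (x)) (x)) + mul (x) (mul (mul (z) (x)) (x))) - mul (y) (mul (mul (x) (x)) (mul (z) (x)) + mul (mul (z) (x)) (mul (x) (x)) + mul (mul (z) (x)) (mul (x) (x)))) = 0" using h10 by simp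
  have key: "(3::real) *\<^sub>R ((U2 x (Uop x y) z) - (Uop x (U2 y z x))) = (12::real) *\<^sub>R ((mul (z) (mul (mul (y) (x)) (mul (x) (x))) + mul (y) (mul (mul (z) (x)) (mul (x) (x))) + mul (x) (mul (mul (z) (y)) (mul (x) (x)))) - (mul (mul (y) (x)) (mul (z) (mul (x) (x))) + mul (mul (z) (x)) (mul (y) (mul (x) (x))) + mul (mul (z) (y)) (mul (x) (mul (x) (x))))) + (-6::real) *\<^sub>R ((mul (z) (mul (mul (x) (x)) (mul (x) (y))) + mul (x) (mul (mul (z) (x)) (mul (x) (y))) + mul (x) (mul (mul (z) (x)) (mul (x) (y)))) - (mul (mul (x) (x)) (mul (z) (mul (x) (y))) + mul (mul (z) (x)) (mul (x) (mul (x) (y))) + mul (mul (z) (x)) (mul (x) (mul (x) (y))))) + (-12::real) *\<^sub>R ((mul (z) (mul (mul (x) (mul (x) (y))) (x)) + mul (x) (mul (mul (z) (mul (x) (y))) (x)) + mul (mul (x) (y)) (mul (mul (z) (x)) (x))) - (mul (mul (x) (mul (x) (y))) (mul (z) (x)) + mul (mul (z) (mul (x) (y))) (mul (x) (x)) + mul (mul (z) (x)) (mul (mul (x) (y)) (x)))) + (6::real) *\<^sub>R ((mul (y) (mul (mul (x) (x)) (mul (x) (z))) + mul (x) (mul (mul (y) (x)) (mul (x) (z))) + mul (x) (mul (mul (y) (x)) (mul (x) (z)))) - (mul (mul (x) (x)) (mul (y) (mul (x) (z))) + mul (mul (y) (x)) (mul (x) (mul (x) (z))) + mul (mul (y) (x))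 (mul (x) (mul (x) (z))))) + (-12::real) *\<^sub>R ((mul (y) (mul (mul (x) (mul (x) (z))) (x)) + mul (x) (mul (mul (y) (mul (x) (z))) (x)) + mul (mul (x) (z)) (mul (mul (y) (x)) (x))) - (mul (mul (x) (mul (x) (z))) (mul (y) (x)) + mul (mul (y) (mul (x) (z))) (mul (x) (x)) + mul (mul (y) (x)) (mul (mul (x) (z)) (x)))) + (-6::real) *\<^sub>R ((mul (y) (mul (mul (x) (mul (x) (x))) (z)) + mul (x) (mul (mul (y) (mul (x) (x))) (z)) + mul (mul (x) (x)) (mul (mul (y) (x)) (z))) - (mul (mul (x) (mul (x) (x))) (mul (y) (z)) + mul (mul (y) (mul (x) (x))) (mul (x) (z)) + mul (mul (y) (x)) (mul (mul (x) (x)) (z)))) + (6::real) *\<^sub>R ((mul (mul (y) (z)) (mul (mul (x) (x)) (x)) + mul (x) (mul (mul (mul (y) (z)) (x)) (x)) + mul (x) (mul (mul (mul (y) (z)) (x)) (x))) - (mul (mul (x) (x)) (mul (mul (y) (z)) (x)) + mul (mul (mul (y) (z)) (x)) (mul (x) (x)) + mul (mul (mul (y) (z)) (x)) (mul (x) (x)))) + (-4::real) *\<^sub>R ((mul (x) (mul (mul (x) (x)) (mul (y) (z))) + mul (x) (mul (mul (x) (x)) (mul (y) (z))) + mul (x) (mul (mul (x) (x)) (mul (y) (z)))) - (mul (mul (x) (x)) (mul (x) (mul (y) (z))) + mul (mul (x) (x)) (mul (x) (mul (y) (z))) + mul (mul (x) (x)) (mul (x) (mul (y) (z))))) + (6::real)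 *\<^sub>R ((mul (x) (mul (mul (x) (mul (x) (y))) (z)) + mul (x) (mul (mul (x) (mul (x) (y))) (z)) + mul (mul (x) (y)) (mul (mul (x) (x)) (z))) - (mul (mul (x) (mul (x) (y))) (mul (x) (z)) + mul (mul (x) (mul (x) (y))) (mul (x) (z)) + mul (mul (x) (x)) (mul (mul (x) (y)) (z)))) + (2::real) *\<^sub>R (mul (z) (mul (x) (mul (mul (x) (x)) (y)) + mul (x) (mul (mul (x) (x)) (y)) + mul (x) (mul (mul (x) (x)) (y))) - mul (z) (mul (mul (x) (x)) (mul (x) (y)) + mul (mul (x) (x)) (mul (x) (y)) + mul (mul (x) (x)) (mul (x) (y)))) + (6::real) *\<^sub>R (mul (y) (mul (z) (mul (mul (x) (x)) (x)) + mul (x) (mul (mul (z) (x)) (x)) + mul (x) (mul (mul (z) (x)) (x))) - mul (y) (mul (mul (x) (x)) (mul (z) (x)) + mul (mul (z) (x)) (mul (x) (x)) + mul (mul (z) (x)) (mul (x) (x))))"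
    unfolding U2_def Uop_def
    by (simp only: mexp, (simp add: mc)?, (simp add: vec_eq_iff)?)
  have "(3::real) *\<^sub>R ((U2 x (Uop x y) z) - (Uop x (U2 y z x))) = 0" unfolding key z0 z1 z2 z3 z4 z5 z6 z7 z8 z9 z10 by simp
  then show ?thesis by simp
qed

end


lemma prod_if_one:
  fixes f g :: "'n::finite \<Rightarrow> real"
  shows "(\<Prod>j\<in>UNIV. if j = k then f j else g j) = f k * (\<Prod>j\<in>UNIV-{k}. g j)"
proof -
  have "(\<Prod>j\<in>UNIV. if j = k then f j else g j) = (if k = k then f k else g k) * (\<Prod>j\<in>UNIV-{k}. if j = k then f j else g j)"
    by (rule prod.remove) auto
  also have "(\<Prod>j\<in>UNIV-{k}. if j = k then f j else g j) = (\<Prod>j\<in>UNIV-{k}. g j)"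
    by (rule prod.cong) auto
  finally show ?thesis by simp
qed

lemma det_has_derivative:
  fixes B :: "'a::real_normed_vector \<Rightarrow> real^'n^'n" and B' :: "'a \<Rightarrow> real^'n^'n"
  assumes d: "\<And>i j. ((\<lambda>x. B x $ i $ j) has_derivative (\<lambda>u. B' u $ i $ j)) (at x)"
  shows "((\<lambda>x. det (B x)) has_derivative
     (\<lambda>u. \<Sum>k\<in>UNIV. det (\<chi> i j. if i = k then B' u $ i $ j else B x $ i $ j))) (at x)"
proof -
  have 1: "((\<lambda>x. det (B x)) has_derivative (\<lambda>u. \<Sum>p\<in>{p. p permutes (UNIV::'n set)}. of_int(sign p) *
       (\<Sum>i\<in>UNIV. B' u $ i $ p i * (\<Prod>j\<in>UNIV-{i}. B x $ j $ p j)))) (at x)"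
    unfolding det_def
    apply (rule has_derivative_sum)
    apply (rule has_derivative_mult_right)
    apply (rule has_derivative_prod)
    apply (rule d)
    done
  have 2: "(\<Sum>k\<in>UNIV. det (\<chi> i j. if i = k then B' u $ i $ j else B x $ i $ j)) =
     (\<Sum>p\<in>{p. p permutes (UNIV::'n set)}. of_int(sign p) *
       (\<Sum>i\<in>UNIV. B' u $ i $ p i * (\<Prod>j\<in>UNIV-{i}. B x $ j $ p j)))" for u
  proof -
    have "(\<Sum>k\<in>UNIV. det (\<chi> i j. if i = k then B' u $ i $ j else B x $ i $ j)) =
      (\<Sum>k\<in>UNIV. \<Sum>p\<in>{p. p permutes (UNIV::'n set)}. of_int(sign p) *
         (\<Prod>j\<in>UNIV. if j = k then B' u $ j $ p j else B x $ j $ p j))"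
      by (rule sum.cong[OF refl], simp add: det_def)
    also have "\<dots> = (\<Sum>p\<in>{p. p permutes (UNIV::'n set)}. \<Sum>k\<in>UNIV. of_int(sign p) *
         (\<Prod>j\<in>UNIV. if j = k then B' u $ j $ p j else B x $ j $ p j))"
      by (rule sum.swap)
    also have "\<dots> = (\<Sum>p\<in>{p. p permutes (UNIV::'n set)}. of_int(sign p) *
       (\<Sum>i\<in>UNIV. B' u $ i $ p i * (\<Prod>j\<in>UNIV-{i}. B x $ j $ p j)))"
      by (rule sum.cong[OF refl], simp only: prod_if_one sum_distrib_left)
    finally show ?thesis .
  qed
  show ?thesis using 1 by (simp add: 2)
qed

lemma matrix_inv_props:
  fixes A :: "real^'n^'n"
  assumes "det A \<noteq> 0"
  shows "A ** matrix_inv A = mat 1 \<and> matrix_inv A ** A = mat 1"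
proof -
  have "\<exists>A'::real^'n^'n. A ** A' = mat 1 \<and> A' ** A = mat 1"
    using assms invertible_det_nz[of A] unfolding invertible_def by blast
  then show ?thesis unfolding matrix_inv_def by (rule someI_ex)
qed

lemma sum_det_rows:
  fixes A H :: "real^'n^'n"
  assumes "det A \<noteq> 0"
  shows "(\<Sum>k\<in>UNIV. det (\<chi> i j. if i = k then H $ i $ j else A $ i $ j)) = det A * trace (matrix_inv A ** H)"
proof -
  have inv: "matrix_inv A ** A = mat 1" "A ** matrix_inv A = mat 1"
    using matrix_inv_props[OF assms] by auto
  have "det (\<chi> i j. if i = k then H $ i $ j else A $ i $ j) = (H ** matrix_inv A) $ k $ k * det A" for k
  proof -
    let ?x = "row k (H ** matrix_inv A)"
    have r: "(\<Sum>i\<in>UNIV. ?x$i *s row i A) = row k H"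
    proof -
      have "(\<Sum>i\<in>UNIV. ?x$i *s row i A) = row k ((H ** matrix_inv A) ** A)"
        by (simp add: row_def vec_eq_iff matrix_matrix_mult_def sum_component mult.commute)
      also have "\<dots> = row k H" by (simp add: matrix_mul_assoc[symmetric] inv)
      finally show ?thesis .
    qed
    have "(\<chi> i j. if i = k then H $ i $ j else A $ i $ j) = (\<chi> i. if i = k then (\<Sum>i\<in>UNIV. ?x$i *s row i A) else row i A)"
      unfolding r by (simp add: vec_eq_iff row_def)
    then show ?thesis using cramer_lemma_transpose[of k ?x A] by (simp add: row_def)
  qed
  then have "(\<Sum>k\<in>UNIV. det (\<chi> i j. if i = k then H $ i $ j else A $ i $ j)) = det A * trace (H ** matrix_inv A)"
    by (simp add: trace_def sum_distrib_left mult.commute)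
  then show ?thesis by (metis trace_mul_sym)
qed


lemma mw: "linear (f::real^'n \<Rightarrow> real^'m) \<Longrightarrow> matrix f *v x = f x"
  using matrix_vector_mul(2)[of f] by metis

lemma trace_matrix: "trace (matrix (f::real^'n \<Rightarrow> real^'n)) = (\<Sum>i\<in>UNIV. f (axis i 1) $ i)"
  by (simp add: trace_def matrix_def)

lemma tr_swap:
  fixes f g :: "real^'n \<Rightarrow> real^'n"
  assumes "linear f" "linear g"
  shows "(\<Sum>i\<in>UNIV. f (g (axis i 1)) $ i) = (\<Sum>i\<in>UNIV. g (f (axis i 1)) $ i)"
proof -
  have "trace (matrix (f \<circ> g)) = trace (matrix (g \<circ> f))"
    using matrix_compose[OF assms(2,1)] matrix_compose[OF assms] trace_mul_sym by metis
  then show ?thesis by (simp add: trace_matrix)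
qed

context jalg begin

lemma linL: "linear (\<lambda>y. mul x y)"
  using bil unfolding bilinear_def by blast

lemma linU: "linear (Uop x)"
  by (rule linearI) (simp_all add: Uop_def mexp algebra_simps)

lemma linU2: "linear (U2 a b)"
  by (rule linearI) (simp_all add: U2_def mexp algebra_simps)

lemma linU2': "linear (\<lambda>z. U2 a z b)"
  by (rule linearI) (simp_all add: U2_def mexp algebra_simps)

lemma Pop_eq: "Pop mul x = Uop x"
  by (rule ext) (simp add: Pop_def Lop_def Uop_def)

definition T :: "real^'n \<Rightarrow> real" where
  "T w = (\<Sum>i\<in>UNIV. mul w (axis i 1) $ i)"

lemma gform_T: "gform mul a b = T (mul a b)"
  by (simp add: gform_def T_def trace_matrix Lop_def)

lemma T_add: "T (v + w) = T v + T w" by (simp add: T_def mexp sum.distrib)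
lemma T_sub: "T (v - w) = T v - T w" by (simp add: T_def mexp sum_subtractf)
lemma T_scale: "T (r *\<^sub>R v) = r * T v" by (simp add: T_def mexp sum_distrib_left)

lemma T_cyc: "T (mul p (mul q r)) = T (mul q (mul p r))"
proof -
  have d: "mul (mul p (mul q r) - mul q (mul p r)) z = mul p (mul q (mul r z)) - mul q (mul p (mul r z)) - mul r (mul p (mul q z)) + mul r (mul q (mul p z))" for z
    by (rule deriv_id)
  have l1: "linear (\<lambda>z. mul p (mul q z))" "linear (\<lambda>z. mul q (mul p z))"
    using linear_compose[OF linL linL] by (auto simp: o_def)
  have s1: "(\<Sum>i\<in>UNIV. mul p (mul q (mul r (axis i 1))) $ i) = (\<Sum>i\<in>UNIV. mul r (mul p (mul q (axis i 1))) $ i)"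
    using tr_swap[OF l1(1) linL, of r] by simp
  have s2: "(\<Sum>i\<in>UNIV. mul q (mul p (mul r (axis i 1))) $ i) = (\<Sum>i\<in>UNIV. mul r (mul q (mul p (axis i 1))) $ i)"
    using tr_swap[OF l1(2) linL, of r] by simp
  have "T (mul p (mul q r) - mul q (mul p r)) = 0"
    unfolding T_def d using s1 s2 by (simp add: sum_subtractf sum.distrib)
  then show ?thesis by (simp add: T_sub)
qed

lemma g_sym: "gform mul a b = gform mul b a"
  by (simp add: gform_T mc)

lemma g_assoc: "T (mul (mul c a) b) = T (mul a (mul c b))"
proof -
  have "T (mul (mul c a) b) = T (mul b (mul a c))" by (simp add: mc)
  also have "\<dots> = T (mul a (mul b c))" by (rule T_cyc)
  also have "\<dots> = T (mul a (mul c b))" by (simp add: mc)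
  finally show ?thesis .
qed

lemma g_U_sym: "gform mul (Uop x a) b = gform mul a (Uop x b)"
proof -
  have "T (mul (mul x (mul x a)) b) = T (mul a (mul x (mul x b)))"
    using g_assoc[of x "mul x a" b] g_assoc[of x a "mul x b"] by simp
  moreover have "T (mul (mul (mul x x) a) b) = T (mul a (mul (mul x x) b))"
    by (rule g_assoc)
  ultimately show ?thesis
    by (simp add: gform_T Uop_def mexp T_add T_sub T_scale)
qed

end


context jalg begin

lemma bb: "bounded_bilinear mul"
  using bil bilinear_conv_bounded_bilinear by blast

lemma mul_deriv:
  assumes "(f has_derivative f') (at x within s)" "(g has_derivative g') (at x within s)"
  shows "((\<lambda>x. mul (f x) (g x)) has_derivative (\<lambda>h. mul (f x) (g' h) + mul (f' h) (g x))) (at x within s)"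
  using bounded_bilinear.FDERIV[OF bb assms] .

lemma Uop_deriv: "((\<lambda>x. Uop x v) has_derivative (\<lambda>u. U2 x u v)) (at x)"
proof -
  have 1: "((\<lambda>x. mul x (mul x v)) has_derivative (\<lambda>h. mul x (mul h v) + mul h (mul x v))) (at x)"
    using mul_deriv[OF has_derivative_ident mul_deriv[OF has_derivative_ident has_derivative_const]]
    by (simp add: mexp)
  have 2: "((\<lambda>x. mul (mul x x) v) has_derivative (\<lambda>h. mul (mul x h + mul h x) v)) (at x)"
    using mul_deriv[OF mul_deriv[OF has_derivative_ident has_derivative_ident] has_derivative_const]
    by (simp add: mexp)
  show ?thesis unfolding Uop_def
    apply (rule has_derivative_eq_rhs)
     apply (rule has_derivative_diff[OF has_derivative_scaleR_right[OF 1] 2])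
    apply (simp add: U2_def fun_eq_iff mexp)
    apply (simp add: mc vec_eq_iff algebra_simps)
    done
qed

lemma entry_deriv: "((\<lambda>x. matrix (Uop x) $ i $ j) has_derivative (\<lambda>u. matrix (U2 x u) $ i $ j)) (at x)"
  unfolding matrix_def
  using bounded_linear.has_derivative[OF bounded_linear_vec_nth Uop_deriv[of "axis j 1" x], of i]
  by simp

abbreviation Dt :: "real^'n \<Rightarrow> real" where "Dt x \<equiv> det (matrix (Uop x))"

lemma D_deriv_gen: "(Dt has_derivative (\<lambda>u. \<Sum>k\<in>UNIV. det (\<chi> i j. if i = k then matrix (U2 x u) $ i $ j else matrix (Uop x) $ i $ j))) (at x)"
  by (rule det_has_derivative[OF entry_deriv])

lemma Dt_cont: "continuous_on S Dt"
  using D_deriv_gen has_derivative_continuous continuous_at_imp_continuous_on by blast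

lemma Uop_inv:
  assumes "Dt x \<noteq> 0"
  shows "Uop x (matrix_inv (matrix (Uop x)) *v v) = v"
proof -
  have "Uop x (matrix_inv (matrix (Uop x)) *v v) = matrix (Uop x) *v (matrix_inv (matrix (Uop x)) *v v)"
    by (simp add: mw linU)
  also have "\<dots> = v" using matrix_inv_props[OF assms]
    by (simp add: matrix_vector_mul_assoc)
  finally show ?thesis .
qed

lemma trace_key:
  assumes "Dt x \<noteq> 0"
  shows "trace (matrix_inv (matrix (Uop x)) ** matrix (U2 x u)) = 2 * gform mul u (matrix_inv (matrix (Uop x)) *v x)"
proof -
  let ?A = "matrix (Uop x)" let ?Ai = "matrix_inv ?A"
  define y where "y = ?Ai *v u"
  define W where "W = (\<lambda>z. U2 y z x)"
  have yu: "Uop x y = u" unfolding y_def by (rule Uop_inv[OF assms])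
  have "U2 x u = Uop x \<circ> W"
    unfolding W_def using fund_id[of x y] yu by (simp add: fun_eq_iff)
  then have "matrix (U2 x u) = ?A ** matrix W"
    using matrix_compose[OF _ linU] linU2' unfolding W_def by metis
  then have "?Ai ** matrix (U2 x u) = matrix W"
    using matrix_inv_props[OF assms] by (simp add: matrix_mul_assoc)
  then have "trace (?Ai ** matrix (U2 x u)) = (\<Sum>i\<in>UNIV. W (axis i 1) $ i)"
    by (simp add: trace_matrix)
  also have "\<dots> = 2 * T (mul y x)"
  proof -
    have s: "(\<Sum>i\<in>UNIV. mul y (mul x (axis i 1)) $ i) = (\<Sum>i\<in>UNIV. mul x (mul y (axis i 1)) $ i)"
      using tr_swap[OF linL linL, of y x] by simp
    show ?thesis
      unfolding W_def U2_def T_def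
      using s apply (simp add: sum.distrib sum_subtractf sum_distrib_left mc algebra_simps)
      apply (simp only: sum_distrib_left[symmetric])
      done
  qed
  also have "T (mul y x) = gform mul y x" by (simp add: gform_T)
  also have "gform mul y x = gform mul y (Uop x (?Ai *v x))" using Uop_inv[OF assms, of x] by simp
  also have "\<dots> = gform mul (Uop x y) (?Ai *v x)" by (simp add: g_U_sym)
  also have "\<dots> = gform mul u (?Ai *v x)" by (simp add: yu)
  finally show ?thesis .
qed

lemma D_deriv:
  assumes "Dt x \<noteq> 0"
  shows "(Dt has_derivative (\<lambda>u. 2 * Dt x * gform mul u (matrix_inv (matrix (Uop x)) *v x))) (at x)"
  using D_deriv_gen[of x]
  by (simp add: sum_det_rows[OF assms] trace_key[OF assms] ac_simps)

end


locale jalgu = jalg mul for mul :: "real^'n \<Rightarrow> real^'n \<Rightarrow> real^'n" +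
  fixes e :: "real^'n"
  assumes unit: "\<And>x. mul e x = x"
begin

definition Y where "Y = connected_component_set {x. Dt x \<noteq> 0} e"

lemma Ycomp_eq: "Ycomp mul e = Y"
  by (simp add: Ycomp_def Y_def jinvertible_def Pop_eq)

lemma omega_eq: "omega mul x = sqrt \<bar>Dt x\<bar>"
  by (simp add: omega_def Pop_eq)

lemma jinv_eq: "jinv mul x = matrix_inv (matrix (Uop x)) *v x"
  by (simp add: jinv_def Pop_eq)

lemma open_inv: "open {x. Dt x \<noteq> 0}"
  using open_Collect_neq[OF Dt_cont continuous_on_const] .

lemma Y_open: "open Y"
  unfolding Y_def by (rule open_connected_component[OF open_inv])

lemma Y_conn: "connected Y"
  unfolding Y_def by (rule connected_connected_component)

lemma Y_sub: "Y \<subseteq> {x. Dt x \<noteq> 0}"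
  unfolding Y_def by (rule connected_component_subset)

lemma Uop_e: "Uop e = id"
  by (rule ext) (simp add: Uop_def unit vec_eq_iff)

lemma Dt_e: "Dt e = 1"
proof -
  have "matrix (Uop e) = mat 1" unfolding Uop_e by (simp add: matrix_id_mat_1)
  then show ?thesis by simp
qed

lemma e_Y: "e \<in> Y"
  unfolding Y_def using Dt_e by (simp add: connected_component_refl_eq)

lemma Uop_scale: "Uop (t *\<^sub>R x) = ((*\<^sub>R) (t^2)) \<circ> Uop x"
  by (rule ext) (simp add: Uop_def mexp power2_eq_square algebra_simps)

lemma Dt_scale: "Dt (t *\<^sub>R x) = (t^2)^CARD('n) * Dt x"
proof -
  have l: "linear ((*\<^sub>R) (t^2) :: real^'n \<Rightarrow> real^'n)" by (rule linear_scaleR)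
  have "matrix (Uop (t *\<^sub>R x)) = matrix ((*\<^sub>R) (t^2)) ** matrix (Uop x)"
    unfolding Uop_scale by (rule matrix_compose[OF linU l])
  then show ?thesis by (simp add: det_mul)
qed

lemma Dt_pos: "x \<in> Y \<Longrightarrow> Dt x > 0"
proof (rule ccontr)
  assume xY: "x \<in> Y" and "\<not> Dt x > 0"
  then have "Dt x < 0" using Y_sub by force
  have c: "connected (Dt ` Y)"
    using connected_continuous_image[OF Dt_cont Y_conn] .
  have "0 \<in> Dt ` Y"
    using c unfolding connected_iff_interval
    using imageI[OF xY, of Dt] imageI[OF e_Y, of Dt] Dt_e \<open>Dt x < 0\<close>
    by (metis less_eq_real_def zero_le_one)
  then show False using Y_sub by auto
qed

lemma Y_scale:
  assumes "x \<in> Y" "t > 0"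
  shows "t *\<^sub>R x \<in> Y"
proof -
  let ?T = "(\<lambda>s. s *\<^sub>R x) ` {min 1 t .. max 1 t}"
  have "x \<in> ?T" by (rule image_eqI[of _ _ 1]) auto
  moreover have "connected ?T"
    by (intro connected_continuous_image continuous_intros) (simp add: connected_Icc)
  moreover have "?T \<subseteq> {x. Dt x \<noteq> 0}"
  proof
    fix y assume "y \<in> ?T"
    then obtain s where "s \<ge> min 1 t" "y = s *\<^sub>R x" by auto
    then have "s > 0" using assms by auto
    then show "y \<in> {x. Dt x \<noteq> 0}"
      using \<open>y = s *\<^sub>R x\<close> Dt_scale Dt_pos[OF assms(1)] by simp
  qed
  ultimately have "?T \<subseteq> connected_component_set {x. Dt x \<noteq> 0} x"
    by (rule connected_component_maximal)
  also have "\<dots> = Y"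
    using assms(1) unfolding Y_def by (metis connected_component_eq)
  finally show ?thesis by (rule subsetD) (rule image_eqI[of _ _ t], auto)
qed

lemma omega_scale:
  assumes "t > 0"
  shows "omega mul (t *\<^sub>R x) = t ^ CARD('n) * omega mul x"
proof -
  have p: "(t^2)^CARD('n) = (t^CARD('n))^2" by (simp add: power_mult[symmetric] mult.commute)
  have "sqrt \<bar>(t^2)^CARD('n) * Dt x\<bar> = t ^ CARD('n) * sqrt \<bar>Dt x\<bar>"
    unfolding p using assms by (simp add: abs_mult real_sqrt_mult)
  then show ?thesis by (simp add: omega_eq Dt_scale)
qed

end


context jalgu begin

lemma Dt_zero: "Dt 0 = 0"
proof -
  have a: "Dt (0 *\<^sub>R 0) = ((0::real)^2)^CARD('n) * Dt 0" by (rule Dt_scale)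
  have b: "((0::real)^2)^CARD('n) = 0" by (simp add: zero_power)
  show ?thesis using a unfolding b by (simp only: scaleR_zero_left mult_zero_left)
qed

lemma jinv_Uop: "Dt x \<noteq> 0 \<Longrightarrow> Uop x (jinv mul x) = x"
  unfolding jinv_eq by (rule Uop_inv)

lemma jinv_nz: "Dt x \<noteq> 0 \<Longrightarrow> jinv mul x \<noteq> 0"
  using jinv_Uop[of x] Dt_zero by (auto simp: Uop_def mexp)

lemma omega_deriv:
  assumes "x \<in> Y"
  shows "(omega mul has_derivative (\<lambda>u. omega mul x * gform mul u (jinv mul x))) (at x)"
proof -
  have p: "Dt x > 0" using Dt_pos[OF assms] .
  have p': "Dt x \<noteq> 0" using p by simp
  have "((\<lambda>y. sqrt (Dt y)) has_derivative (\<lambda>u. 2 * Dt x * gform mul u (jinv mul x) * (inverse (sqrt (Dt x)) / 2))) (at x)"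
    using DERIV_compose_FDERIV[OF DERIV_real_sqrt[OF p] D_deriv[OF p']] p by (simp add: jinv_eq)
  moreover have "(\<lambda>u. 2 * Dt x * gform mul u (jinv mul x) * (inverse (sqrt (Dt x)) / 2)) =
     (\<lambda>u. omega mul x * gform mul u (jinv mul x))"
  proof
    fix u
    have "Dt x * inverse (sqrt (Dt x)) = sqrt (Dt x)"
      using p by (metis real_div_sqrt divide_inverse less_imp_le)
    then show "2 * Dt x * gform mul u (jinv mul x) * (inverse (sqrt (Dt x)) / 2) = omega mul x * gform mul u (jinv mul x)"
      using p by (simp add: omega_eq algebra_simps)
  qed
  ultimately have "((\<lambda>y. sqrt (Dt y)) has_derivative (\<lambda>u. omega mul x * gform mul u (jinv mul x))) (at x)"
    by simp
  then show ?thesis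
    by (rule has_derivative_transform_within_open[OF _ Y_open assms])
       (auto simp: omega_eq abs_of_pos Dt_pos)
qed

lemma omega_cont: "continuous_on Y (omega mul)"
  using omega_deriv has_derivative_continuous continuous_at_imp_continuous_on by blast

lemma omega_pos: "x \<in> Y \<Longrightarrow> omega mul x > 0"
  using Dt_pos[of x] by (simp add: omega_eq)

lemma jinv_cramer:
  assumes "Dt x \<noteq> 0"
  shows "jinv mul x = (\<chi> k. det (\<chi> i j. if j = k then x $ i else matrix (Uop x) $ i $ j) / Dt x)"
proof -
  have "matrix (Uop x) *v jinv mul x = x"
    using jinv_Uop[OF assms] by (simp add: mw linU)
  then show ?thesis using cramer[OF assms] by blast
qed

lemma cramer_det_cont: "continuous_on S (\<lambda>x. det (\<chi> i j. if j = k then x $ i else matrix (Uop x) $ i $ j))"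
proof -
  have "((\<lambda>x. det (\<chi> i j. if j = k then x $ i else matrix (Uop x) $ i $ j)) has_derivative
      (\<lambda>u. \<Sum>k'\<in>UNIV. det (\<chi> i j. if i = k' then (\<chi> i j. if j = k then u $ i else matrix (U2 x u) $ i $ j) $ i $ j
          else (\<chi> i j. if j = k then x $ i else matrix (Uop x) $ i $ j) $ i $ j))) (at x)" for x
  proof (rule det_has_derivative)
    fix i j
    show "((\<lambda>x. (\<chi> i j. if j = k then x $ i else matrix (Uop x) $ i $ j) $ i $ j) has_derivative
        (\<lambda>u. (\<chi> i j. if j = k then u $ i else matrix (U2 x u) $ i $ j) $ i $ j)) (at x)"
      using entry_deriv[of i j x] bounded_linear.has_derivative[OF bounded_linear_vec_nth has_derivative_ident, of i]
      by (cases "j = k") simp_all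
  qed
  then show ?thesis
    using has_derivative_continuous continuous_at_imp_continuous_on by blast
qed

lemma jinv_cont: "continuous_on Y (jinv mul)"
proof -
  have "continuous_on Y (\<lambda>x. (\<chi> k. det (\<chi> i j. if j = k then x $ i else matrix (Uop x) $ i $ j) / Dt x))"
    using Y_sub by (intro continuous_intros cramer_det_cont Dt_cont) auto
  then show ?thesis
    by (rule continuous_on_eq) (use Y_sub jinv_cramer in auto)
qed

lemma g_lin1: "linear (\<lambda>u. gform mul u w)"
  by (rule linearI) (simp_all add: gform_T mexp T_add T_scale)

lemma g_cont2: "continuous_on S (\<lambda>w. gform mul c w)"
  unfolding gform_T T_def
  by (intro continuous_intros bounded_bilinear.continuous_on[OF bb]) 

lemma g_expand: "gform mul u w = (\<Sum>i\<in>UNIV. u $ i * gform mul (axis i 1) w)"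
proof -
  have "gform mul u w = gform mul (\<Sum>i\<in>UNIV. u $ i *\<^sub>R axis i 1) w"
    using basis_expansion[of u] by (simp add: scalar_mult_eq_scaleR)
  also have "\<dots> = (\<Sum>i\<in>UNIV. u $ i * gform mul (axis i 1) w)"
    unfolding linear_sum[OF g_lin1] o_def linear_scale[OF g_lin1] by simp
  finally show ?thesis .
qed

definition vv :: "real^'n \<Rightarrow> real^'n" where
  "vv x = (\<chi> i. omega mul x * gform mul (axis i 1) (jinv mul x))"

definition fp :: "real^'n \<Rightarrow> (real^'n) \<Rightarrow>\<^sub>L real" where
  "fp x = blinfun_inner_left (vv x)"

lemma fp_apply: "blinfun_apply (fp x) u = omega mul x * gform mul u (jinv mul x)"
  by (simp add: fp_def vv_def inner_vec_def g_expand[of u] sum_distrib_left algebra_simps)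

lemma vv_cont: "continuous_on Y vv"
  unfolding vv_def
  by (intro continuous_intros omega_cont continuous_on_compose2[OF g_cont2 jinv_cont]) auto

lemma fp_cont: "continuous_on Y fp"
  unfolding fp_def
  by (rule continuous_on_compose2[OF linear_continuous_on[OF bounded_linear_blinfun_inner_left] vv_cont]) auto

lemma omega_deriv': "x \<in> Y \<Longrightarrow> (omega mul has_derivative blinfun_apply (fp x)) (at x)"
  using omega_deriv by (simp add: fp_apply[abs_def])

end


lemma ift_setup:
  fixes f :: "'a::euclidean_space \<Rightarrow> real" and f' :: "'a \<Rightarrow> 'a \<Rightarrow>\<^sub>L real"
  assumes U: "open U" "q \<in> U"
    and der: "\<And>x. x \<in> U \<Longrightarrow> (f has_derivative blinfun_apply (f' x)) (at x)"
    and cont: "continuous_on U f'"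
    and fq: "f q = 0" and w: "blinfun_apply (f' q) w = 1"
    and \<Phi>_def: "\<And>z. \<Phi> z = (z - q) - blinfun_apply (f' q) (z - q) *\<^sub>R w + f z *\<^sub>R w"
  obtains U' V g g' where "open U'" "U' \<subseteq> U" "q \<in> U'" "open V" "0 \<in> V"
    "continuous_on V g" "\<And>v. v \<in> V \<Longrightarrow> g v \<in> U'" "g 0 = q"
    "\<And>z. z \<in> U' \<Longrightarrow> \<Phi> z \<in> V"
    "\<And>z. z \<in> U' \<Longrightarrow> g (\<Phi> z) = z"
    "continuous_on U' \<Phi>"
    "\<And>v. v \<in> V \<Longrightarrow> f (g v) = blinfun_apply (f' q) v"
    "\<And>v. v \<in> V \<Longrightarrow> (g has_derivative g' v) (at v)"
    "\<And>v k. v \<in> V \<Longrightarrow> blinfun_apply (f' (g v)) (g' v k) = blinfun_apply (f' q) k"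
    "\<And>k. g' 0 k = k"
proof -
  define \<Phi>' where "\<Phi>' z = id_blinfun - (blinfun_scaleR_left w o\<^sub>L f' q) + (blinfun_scaleR_left w o\<^sub>L f' z)" for z
  have \<Phi>'_apply: "blinfun_apply (\<Phi>' z) u = u - blinfun_apply (f' q) u *\<^sub>R w + blinfun_apply (f' z) u *\<^sub>R w" for z u
    by (simp add: \<Phi>'_def blinfun.add_left blinfun.diff_left)
  have d\<Phi>: "(\<Phi> has_derivative blinfun_apply (\<Phi>' z)) (at z)" if "z \<in> U" for z
  proof -
    have 1: "((\<lambda>z. blinfun_apply (f' q) (z - q)) has_derivative (\<lambda>u. blinfun_apply (f' q) u)) (at z)"
    proof -
      have "((\<lambda>z. z - q) has_derivative (\<lambda>u. u)) (at z)"
        using has_derivative_diff[OF has_derivative_ident has_derivative_const] by simp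
      then show ?thesis by (rule bounded_linear.has_derivative[OF blinfun.bounded_linear_right])
    qed
    have "(\<Phi> has_derivative (\<lambda>u. (u - 0) - blinfun_apply (f' q) u *\<^sub>R w + blinfun_apply (f' z) u *\<^sub>R w)) (at z)"
      unfolding \<Phi>_def
      by (intro has_derivative_add has_derivative_diff has_derivative_ident has_derivative_const
          has_derivative_scaleR_left 1 der that)
    then show ?thesis by (simp add: \<Phi>'_apply[abs_def])
  qed
  have c\<Phi>': "continuous_on U \<Phi>'"
    unfolding \<Phi>'_def
    by (intro continuous_intros bounded_bilinear.continuous_on[OF bounded_bilinear_blinfun_compose] cont)
  have \<Phi>'q: "\<Phi>' q = id_blinfun"
    by (rule blinfun_eqI) (simp add: \<Phi>'_apply)
  have invf: "id_blinfun o\<^sub>L \<Phi>' q = id_blinfun" by (rule blinfun_eqI) (simp add: \<Phi>'q)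
  obtain U' V g g' where U': "open U'" "U' \<subseteq> U" "q \<in> U'" and V: "open V" "\<Phi> q \<in> V"
    and hom: "homeomorphism U' V \<Phi> g"
    and dg: "\<And>y. y \<in> V \<Longrightarrow> (g has_derivative (g' y)) (at y)"
    and g': "\<And>y. y \<in> V \<Longrightarrow> g' y = inv (blinfun_apply (\<Phi>'(g y)))"
    and bij: "\<And>y. y \<in> V \<Longrightarrow> bij (blinfun_apply (\<Phi>'(g y)))"
    using inverse_function_theorem[OF U(1) d\<Phi> c\<Phi>' U(2) invf] by blast
  have \<Phi>q: "\<Phi> q = 0" by (simp add: \<Phi>_def fq)
  have hom': "\<And>z. z \<in> U' \<Longrightarrow> g (\<Phi> z) = z" "\<Phi> ` U' = V" "continuous_on U' \<Phi>"
    "\<And>v. v \<in> V \<Longrightarrow> \<Phi> (g v) = v" "g ` V = U'" "continuous_on V g"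
    using hom unfolding homeomorphism_def by auto
  have g0: "g 0 = q" using hom'(1)[OF U'(3)] \<Phi>q by simp
  have f\<Phi>: "blinfun_apply (f' q) (\<Phi> z) = f z" for z
    by (simp add: \<Phi>_def blinfun.add_right blinfun.diff_right blinfun.scaleR_right w)
  have fq\<Phi>': "blinfun_apply (f' q) (blinfun_apply (\<Phi>' y) x) = blinfun_apply (f' y) x" for y x
    by (simp add: \<Phi>'_apply blinfun.add_right blinfun.diff_right blinfun.scaleR_right w)
  show ?thesis
  proof (rule that[OF U' V(1) _ hom'(6) _ g0 _ _ hom'(3) _ dg])
    show "0 \<in> V" using V(2) \<Phi>q by simp
    show "g v \<in> U'" if "v \<in> V" for v using hom'(5) that by blast
    show "\<Phi> z \<in> V" if "z \<in> U'" for z using hom'(2) that by blast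
    show "g (\<Phi> z) = z" if "z \<in> U'" for z using hom'(1) that .
    show "f (g v) = blinfun_apply (f' q) v" if "v \<in> V" for v
      using f\<Phi>[of "g v"] hom'(4)[OF that] by simp
    show "blinfun_apply (f' (g v)) (g' v k) = blinfun_apply (f' q) k" if "v \<in> V" for v k
    proof -
      have "blinfun_apply (\<Phi>' (g v)) (g' v k) = k"
        using g'[OF that] bij[OF that] by (simp add: bij_is_surj surj_f_inv_f)
      then show ?thesis using fq\<Phi>'[of "g v" "g' v k"] by simp
    qed
    show "g' 0 k = k" for k
    proof -
      have "0 \<in> V" using V(2) \<Phi>q by simp
      then have "g' 0 = inv (blinfun_apply id_blinfun)" using g' g0 \<Phi>'q by simp
      then show ?thesis by (simp add: inv_id[unfolded id_def])
    qed
  qed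
qed


lemma exists_w:
  fixes L :: "'a::real_normed_vector \<Rightarrow>\<^sub>L real"
  assumes "blinfun_apply L \<noteq> (\<lambda>u. 0)"
  obtains w where "blinfun_apply L w = 1"
proof -
  obtain u where u: "blinfun_apply L u \<noteq> 0" using assms by auto
  show ?thesis
    by (rule that[of "(1 / blinfun_apply L u) *\<^sub>R u"]) (use u in \<open>simp add: blinfun.scaleR_right\<close>)
qed

lemma tangent_lemma:
  fixes f :: "'a::euclidean_space \<Rightarrow> real" and f' :: "'a \<Rightarrow> 'a \<Rightarrow>\<^sub>L real"
  and h :: "'a \<Rightarrow> real"
  assumes U: "open U" "q \<in> U"
    and der: "\<And>x. x \<in> U \<Longrightarrow> (f has_derivative blinfun_apply (f' x)) (at x)"
    and cont: "continuous_on U f'"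
    and fq: "f q = 0" and nz: "blinfun_apply (f' q) \<noteq> (\<lambda>u. 0)"
    and dh: "(h has_derivative h') (at q)"
    and W: "open W" "q \<in> W" and hz: "\<And>x. x \<in> W \<Longrightarrow> x \<in> U \<Longrightarrow> f x = 0 \<Longrightarrow> h x = 0"
    and u: "blinfun_apply (f' q) u = 0"
  shows "h' u = 0"
proof -
  obtain w where w: "blinfun_apply (f' q) w = 1" using exists_w[OF nz] by blast
  define \<Phi> where "\<Phi> z = (z - q) - blinfun_apply (f' q) (z - q) *\<^sub>R w + f z *\<^sub>R w" for z
  obtain U' V g g' where U': "open U'" "U' \<subseteq> U" "q \<in> U'" and V: "open V" "0 \<in> V"
    and cg: "continuous_on V g" and gV: "\<And>v. v \<in> V \<Longrightarrow> g v \<in> U'" and g0: "g 0 = q"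
    and \<Phi>V: "\<And>z. z \<in> U' \<Longrightarrow> \<Phi> z \<in> V" and g\<Phi>: "\<And>z. z \<in> U' \<Longrightarrow> g (\<Phi> z) = z"
    and c\<Phi>: "continuous_on U' \<Phi>"
    and fg: "\<And>v. v \<in> V \<Longrightarrow> f (g v) = blinfun_apply (f' q) v"
    and dg: "\<And>v. v \<in> V \<Longrightarrow> (g has_derivative g' v) (at v)"
    and kg: "\<And>v k. v \<in> V \<Longrightarrow> blinfun_apply (f' (g v)) (g' v k) = blinfun_apply (f' q) k"
    and g'0: "\<And>k. g' 0 k = k"
    by (rule ift_setup[OF U _ cont fq w \<Phi>_def]) (erule der, auto)
  define Ot where "Ot = {t::real. t *\<^sub>R u \<in> V} \<inter> (\<lambda>t. g (t *\<^sub>R u)) -` W"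
  have cO: "continuous_on {t::real. t *\<^sub>R u \<in> V} (\<lambda>t. g (t *\<^sub>R u))"
    by (rule continuous_on_compose2[OF cg]) (auto intro: continuous_intros)
  have oV: "open {t::real. t *\<^sub>R u \<in> V}"
    using continuous_open_preimage[OF continuous_on_scaleR[OF continuous_on_id continuous_on_const] open_UNIV V(1), of u]
    by (simp add: vimage_def)
  have "open Ot" unfolding Ot_def by (rule continuous_open_preimage[OF cO oV W(1)])
  have "0 \<in> Ot" unfolding Ot_def using V(2) g0 W(2) by simp
  have dk: "((\<lambda>t. h (g (t *\<^sub>R u))) has_derivative (\<lambda>t. h' (g' 0 (t *\<^sub>R u)))) (at 0)"
  proof -
    have a1: "((\<lambda>t::real. t *\<^sub>R u) has_derivative (\<lambda>t. t *\<^sub>R u)) (at 0)"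
      by (rule derivative_eq_intros | simp)+
    have a2: "(g has_derivative g' 0) (at ((\<lambda>t::real. t *\<^sub>R u) 0))" using dg[OF V(2)] by simp
    have c1: "(g \<circ> (\<lambda>t::real. t *\<^sub>R u) has_derivative g' 0 \<circ> (\<lambda>t. t *\<^sub>R u)) (at 0)"
      by (rule diff_chain_at[OF a1 a2])
    have a3: "(h has_derivative h') (at ((g \<circ> (\<lambda>t::real. t *\<^sub>R u)) 0))" using dh g0 by simp
    have "(h \<circ> (g \<circ> (\<lambda>t::real. t *\<^sub>R u)) has_derivative h' \<circ> (g' 0 \<circ> (\<lambda>t. t *\<^sub>R u))) (at 0)"
      by (rule diff_chain_at[OF c1 a3])
    then show ?thesis by (simp add: o_def)
  qed
  then have dk': "((\<lambda>t. h (g (t *\<^sub>R u))) has_derivative (\<lambda>t. t * h' u)) (at 0)"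
  proof -
    have bl: "bounded_linear h'" using dh has_derivative_bounded_linear by blast
    show ?thesis using dk g'0 linear_scale[OF bounded_linear.linear[OF bl]] by simp
  qed
  have "((\<lambda>t::real. 0::real) has_derivative (\<lambda>t. t * h' u)) (at 0)"
  proof (rule has_derivative_transform_within_open[OF dk' \<open>open Ot\<close> \<open>0 \<in> Ot\<close>])
    fix t assume "t \<in> Ot"
    then have t: "t *\<^sub>R u \<in> V" "g (t *\<^sub>R u) \<in> W" unfolding Ot_def by auto
    have "f (g (t *\<^sub>R u)) = 0" using fg[OF t(1)] u by (simp add: blinfun.scaleR_right)
    then show "h (g (t *\<^sub>R u)) = 0" using hz t(2) gV[OF t(1)] U'(2) by blast
  qed
  then have "((\<lambda>t::real. 0::real) has_real_derivative h' u) (at 0)"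
    unfolding has_field_derivative_def
    by (rule has_derivative_eq_rhs) (auto simp: mult.commute)
  then show ?thesis using DERIV_const DERIV_unique by blast
qed

lemma local_const:
  fixes f :: "'a::euclidean_space \<Rightarrow> real" and f' :: "'a \<Rightarrow> 'a \<Rightarrow>\<^sub>L real"
    and om :: "'a \<Rightarrow> real" and dom1 :: "'a \<Rightarrow> 'a \<Rightarrow> real"
  assumes U: "open U" "p \<in> U"
    and der: "\<And>x. x \<in> U \<Longrightarrow> (f has_derivative blinfun_apply (f' x)) (at x)"
    and cont: "continuous_on U f'"
    and fp: "f p = 0" and nz: "blinfun_apply (f' p) \<noteq> (\<lambda>u. 0)"
    and dom1: "\<And>y. y \<in> U \<Longrightarrow> (om has_derivative dom1 y) (at y)"
    and ker: "\<And>y u. y \<in> U \<Longrightarrow> f y = 0 \<Longrightarrow> blinfun_apply (f' y) \<noteq> (\<lambda>u. 0) \<Longrightarrow>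
               blinfun_apply (f' y) u = 0 \<Longrightarrow> dom1 y u = 0"
  obtains W where "open W" "p \<in> W" "\<And>z. z \<in> W \<Longrightarrow> z \<in> U \<Longrightarrow> f z = 0 \<Longrightarrow> om z = om p"
proof -
  obtain w where w: "blinfun_apply (f' p) w = 1" using exists_w[OF nz] by blast
  define \<Phi> where "\<Phi> z = (z - p) - blinfun_apply (f' p) (z - p) *\<^sub>R w + f z *\<^sub>R w" for z
  obtain U' V g g' where U': "open U'" "U' \<subseteq> U" "p \<in> U'" and V: "open V" "0 \<in> V"
    and cg: "continuous_on V g" and gV: "\<And>v. v \<in> V \<Longrightarrow> g v \<in> U'" and g0: "g 0 = p"
    and \<Phi>V: "\<And>z. z \<in> U' \<Longrightarrow> \<Phi> z \<in> V" and g\<Phi>: "\<And>z. z \<in> U' \<Longrightarrow> g (\<Phi> z) = z"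
    and c\<Phi>: "continuous_on U' \<Phi>"
    and fg: "\<And>v. v \<in> V \<Longrightarrow> f (g v) = blinfun_apply (f' p) v"
    and dg: "\<And>v. v \<in> V \<Longrightarrow> (g has_derivative g' v) (at v)"
    and kg: "\<And>v k. v \<in> V \<Longrightarrow> blinfun_apply (f' (g v)) (g' v k) = blinfun_apply (f' p) k"
    and g'0: "\<And>k. g' 0 k = k"
    by (rule ift_setup[OF U _ cont fp w \<Phi>_def]) (erule der, auto)
  obtain r where r: "r > 0" "ball 0 r \<subseteq> V" using V openE by blast
  define W where "W = U' \<inter> \<Phi> -` ball 0 r"
  have "open W" unfolding W_def by (rule continuous_open_preimage[OF c\<Phi> U'(1) open_ball])
  moreover have "p \<in> W" unfolding W_def using U'(3) r(1) by (simp add: \<Phi>_def fp)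
  moreover have "om z = om p" if z: "z \<in> W" "z \<in> U" "f z = 0" for z
  proof -
    define v where "v = \<Phi> z"
    have zU': "z \<in> U'" and vb: "v \<in> ball 0 r" using z(1) unfolding W_def v_def by auto
    have gv: "g v = z" unfolding v_def using g\<Phi>[OF zU'] .
    have vV: "v \<in> V" using vb r(2) by blast
    have fpv: "blinfun_apply (f' p) v = 0" using fg[OF vV] gv z(3) by simp
    have sV: "s *\<^sub>R v \<in> V" if "s \<in> {0..1}" for s
    proof -
      have "norm (s *\<^sub>R v) \<le> norm v" using that by (simp add: mult_left_le_one_le)
      then show ?thesis using vb r(2) by (auto simp: dist_norm)
    qed
    define K where "K s = om (g (s *\<^sub>R v))" for s
    have dK: "(K has_derivative (\<lambda>t. t * dom1 (g (s *\<^sub>R v)) (g' (s *\<^sub>R v) v))) (at s)" if "s *\<^sub>R v \<in> V" for s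
    proof -
      have a1: "((\<lambda>t::real. t *\<^sub>R v) has_derivative (\<lambda>t. t *\<^sub>R v)) (at s)"
        by (rule derivative_eq_intros | simp)+
      have a2: "(g has_derivative g' (s *\<^sub>R v)) (at ((\<lambda>t::real. t *\<^sub>R v) s))" using dg[OF that] by simp
      have c1: "(g \<circ> (\<lambda>t::real. t *\<^sub>R v) has_derivative g' (s *\<^sub>R v) \<circ> (\<lambda>t. t *\<^sub>R v)) (at s)"
        by (rule diff_chain_at[OF a1 a2])
      have a3: "(om has_derivative dom1 (g (s *\<^sub>R v))) (at ((g \<circ> (\<lambda>t::real. t *\<^sub>R v)) s))"
        using dom1 gV[OF that] U'(2) by auto
      have "(om \<circ> (g \<circ> (\<lambda>t::real. t *\<^sub>R v)) has_derivative dom1 (g (s *\<^sub>R v)) \<circ> (g' (s *\<^sub>R v) \<circ> (\<lambda>t. t *\<^sub>R v))) (at s)"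
        by (rule diff_chain_at[OF c1 a3])
      moreover have "bounded_linear (dom1 (g (s *\<^sub>R v)))" using a3 has_derivative_bounded_linear by blast
      moreover have "bounded_linear (g' (s *\<^sub>R v))" using a2 has_derivative_bounded_linear by blast
      ultimately show ?thesis
        unfolding K_def o_def
        by (simp add: linear_scale[OF bounded_linear.linear])
    qed
    have zero: "dom1 (g (s *\<^sub>R v)) (g' (s *\<^sub>R v) v) = 0" if "s *\<^sub>R v \<in> V" for s
    proof (rule ker)
      show "g (s *\<^sub>R v) \<in> U" using gV[OF that] U'(2) by blast
      show "f (g (s *\<^sub>R v)) = 0" using fg[OF that] fpv by (simp add: blinfun.scaleR_right)
      show "blinfun_apply (f' (g (s *\<^sub>R v))) \<noteq> (\<lambda>u. 0)"
      proof
        assume "blinfun_apply (f' (g (s *\<^sub>R v))) = (\<lambda>u. 0)"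
        then have "blinfun_apply (f' (g (s *\<^sub>R v))) (g' (s *\<^sub>R v) w) = 0" by simp
        then show False using kg[OF that, of w] w by simp
      qed
      show "blinfun_apply (f' (g (s *\<^sub>R v))) (g' (s *\<^sub>R v) v) = 0" using kg[OF that] fpv by simp
    qed
    have c: "continuous_on {0..1} K"
      using dK sV has_derivative_continuous continuous_at_imp_continuous_on by blast
    have d: "DERIV K x :> 0" if "0 < x" "x < 1" for x
    proof -
      have xV: "x *\<^sub>R v \<in> V" using sV that by simp
      have "(K has_derivative (\<lambda>t. 0)) (at x)" using dK[OF xV] zero[OF xV] by simp
      then show ?thesis unfolding has_field_derivative_def
        by (rule has_derivative_eq_rhs) auto
    qed
    have "K 1 = K 0" by (rule DERIV_isconst_end[OF _ c d]) simp_all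
    then show ?thesis unfolding K_def using gv g0 by simp
  qed
  ultimately show ?thesis using that by blast
qed


context jalgu begin

lemma card_pos: "0 < CARD('n)" by simp

lemma Delta_eq: "x \<in> Y \<Longrightarrow> {u. blinfun_apply (fp x) u = 0} = Delta mul x"
proof -
  assume x: "x \<in> Y"
  have o: "omega mul x \<noteq> 0" using omega_pos[OF x] by simp
  have n: "real CARD('n) \<noteq> 0" by simp
  show ?thesis
    unfolding Delta_def zeta_def gamma_form_def fp_apply set_eq_iff mem_Collect_eq
    using o n by simp
qed

lemma fp_nz:
  assumes ss: "semisimple mul" and x: "x \<in> Y"
  shows "blinfun_apply (fp x) \<noteq> (\<lambda>u. 0)"
proof
  assume h: "blinfun_apply (fp x) = (\<lambda>u. 0)"
  have "jinv mul x \<noteq> 0" using jinv_nz Y_sub x by blast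
  then obtain y where y: "gform mul (jinv mul x) y \<noteq> 0" using ss unfolding semisimple_def by blast
  have "blinfun_apply (fp x) y = omega mul x * gform mul (jinv mul x) y"
    by (simp add: fp_apply g_sym)
  then show False using h y omega_pos[OF x] by simp
qed

lemma omega_e: "omega mul e = 1"
  by (simp add: omega_eq Dt_e)

lemma level_nonempty:
  assumes "c > 0"
  shows "root CARD('n) c *\<^sub>R e \<in> {x \<in> Y. omega mul x = c}"
proof -
  have r: "root CARD('n) c > 0" using real_root_gt_zero[OF card_pos assms] .
  show ?thesis
    using Y_scale[OF e_Y r] omega_scale[OF r, of e] omega_e assms card_pos by simp
qed

lemma level_conn:
  assumes "c > 0"
  shows "connected {x \<in> Y. omega mul x = c}"
proof -
  define \<phi> where "\<phi> x = root CARD('n) (c / omega mul x) *\<^sub>R x" for x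
  have "{x \<in> Y. omega mul x = c} = \<phi> ` Y"
  proof
    show "{x \<in> Y. omega mul x = c} \<subseteq> \<phi> ` Y"
    proof
      fix x assume "x \<in> {x \<in> Y. omega mul x = c}"
      then have "x \<in> Y" "omega mul x = c" by auto
      then have "\<phi> x = x" using assms by (simp add: \<phi>_def)
      then show "x \<in> \<phi> ` Y" using \<open>x \<in> Y\<close> by (metis image_eqI)
    qed
    show "\<phi> ` Y \<subseteq> {x \<in> Y. omega mul x = c}"
    proof
      fix y assume "y \<in> \<phi> ` Y"
      then obtain x where x: "x \<in> Y" "y = \<phi> x" by auto
      have o: "omega mul x > 0" using omega_pos[OF x(1)] .
      have r: "root CARD('n) (c / omega mul x) > 0"
        using real_root_gt_zero[OF card_pos] assms o by simp
      have "omega mul y = (root CARD('n) (c / omega mul x))^CARD('n) * omega mul x"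
        using x(2) omega_scale[OF r] by (simp add: \<phi>_def)
      also have "\<dots> = c" using assms o card_pos by simp
      finally show "y \<in> {x \<in> Y. omega mul x = c}"
        using Y_scale[OF x(1) r] x(2) by (simp add: \<phi>_def)
    qed
  qed
  moreover have "continuous_on Y \<phi>"
    unfolding \<phi>_def
    by (intro continuous_intros omega_cont) (auto dest: omega_pos)
  ultimately show ?thesis using connected_continuous_image[OF _ Y_conn] by metis
qed

lemma level_integral:
  assumes ss: "semisimple mul" and c: "c > 0"
  shows "integral_manifold (Delta mul) Y {x \<in> Y. omega mul x = c}"
  unfolding integral_manifold_def
  apply (intro conjI ballI)
     apply (use level_nonempty[OF c] in blast)
    apply (rule level_conn[OF c])
   apply blast
  apply (rule exI[of _ Y], rule exI[of _ "\<lambda>x. omega mul x - c"], rule exI[of _ fp])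
  apply (intro conjI)
         apply (rule Y_open)
        apply simp
       apply simp
  using has_derivative_diff[OF omega_deriv' has_derivative_const] apply simp
     apply (rule fp_cont)
    apply (rule fp_nz[OF ss])
    apply simp
   apply auto[1]
  apply (rule Delta_eq)
  apply simp
  done

lemma omega_const:
  assumes S: "integral_manifold (Delta mul) Y S" and a: "a \<in> S" and b: "b \<in> S"
  shows "omega mul a = omega mul b"
proof -
  have conn: "connected S" and SY: "S \<subseteq> Y" using S unfolding integral_manifold_def by auto
  have chart: "\<exists>U f f'. open U \<and> p \<in> U \<and> U \<subseteq> Y \<and>
        (\<forall>x\<in>U. (f has_derivative blinfun_apply (f' x)) (at x)) \<and>
        continuous_on U (f' :: real^'n \<Rightarrow> (real^'n) \<Rightarrow>\<^sub>L real) \<and> blinfun_apply (f' p) \<noteq> (\<lambda>u. 0) \<and>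
        S \<inter> U = {x \<in> U. f x = 0} \<and>
        {u. blinfun_apply (f' p) u = 0} = Delta mul p" if "p \<in> S" for p
  proof -
    have "\<forall>p\<in>S. \<exists>U f f'. open U \<and> p \<in> U \<and> U \<subseteq> Y \<and>
        (\<forall>x\<in>U. (f has_derivative blinfun_apply (f' x)) (at x)) \<and>
        continuous_on U (f' :: real^'n \<Rightarrow> (real^'n) \<Rightarrow>\<^sub>L real) \<and> blinfun_apply (f' p) \<noteq> (\<lambda>u. 0) \<and>
        S \<inter> U = {x \<in> U. f x = 0} \<and>
        {u. blinfun_apply (f' p) u = 0} = Delta mul p"
      using S unfolding integral_manifold_def by (elim conjE)
    then show ?thesis using that by (rule bspec)
  qed
  have loc: "eventually (\<lambda>b. omega mul a' = omega mul b) (at a' within S)" if a': "a' \<in> S" for a'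
  proof -
    obtain U f f' where C: "open U \<and> a' \<in> U \<and> U \<subseteq> Y \<and>
        (\<forall>x\<in>U. (f has_derivative blinfun_apply (f' x)) (at x)) \<and>
        continuous_on U (f' :: real^'n \<Rightarrow> (real^'n) \<Rightarrow>\<^sub>L real) \<and> blinfun_apply (f' a') \<noteq> (\<lambda>u. 0) \<and>
        S \<inter> U = {x \<in> U. f x = 0} \<and>
        {u. blinfun_apply (f' a') u = 0} = Delta mul a'"
      using chart[OF a'] by blast
    have U: "open U" "a' \<in> U" "U \<subseteq> Y"
      and der: "\<And>x. x \<in> U \<Longrightarrow> (f has_derivative blinfun_apply (f' x)) (at x)"
      and cont: "continuous_on U f'"
      and nz: "blinfun_apply (f' a') \<noteq> (\<lambda>u. 0)"
      and SU: "S \<inter> U = {x \<in> U. f x = 0}" using C by auto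
    have fa: "f a' = 0" using SU a' U(2) by blast
    obtain W where W: "open W" "a' \<in> W" and Wc: "\<And>z. z \<in> W \<Longrightarrow> z \<in> U \<Longrightarrow> f z = 0 \<Longrightarrow> omega mul z = omega mul a'"
    proof (rule local_const[OF U(1,2) der cont fa nz, of "omega mul" "\<lambda>y. blinfun_apply (fp y)"])
      show "(omega mul has_derivative blinfun_apply (fp y)) (at y)" if "y \<in> U" for y
        using omega_deriv' U(3) that by blast
      show "blinfun_apply (fp y) u = 0"
        if y: "y \<in> U" "f y = 0" "blinfun_apply (f' y) \<noteq> (\<lambda>u. 0)" "blinfun_apply (f' y) u = 0" for y u
      proof -
        have yS: "y \<in> S" using SU y by blast
        obtain U2 f2 f2' where C2: "open U2 \<and> y \<in> U2 \<and> U2 \<subseteq> Y \<and>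
          (\<forall>x\<in>U2. (f2 has_derivative blinfun_apply (f2' x)) (at x)) \<and>
          continuous_on U2 (f2' :: real^'n \<Rightarrow> (real^'n) \<Rightarrow>\<^sub>L real) \<and> blinfun_apply (f2' y) \<noteq> (\<lambda>u. 0) \<and>
          S \<inter> U2 = {x \<in> U2. f2 x = 0} \<and>
          {u. blinfun_apply (f2' y) u = 0} = Delta mul y"
          using chart[OF yS] by blast
        have U2: "open U2" "y \<in> U2"
          and der2: "\<And>x. x \<in> U2 \<Longrightarrow> (f2 has_derivative blinfun_apply (f2' x)) (at x)"
          and SU2: "S \<inter> U2 = {x \<in> U2. f2 x = 0}"
          and k2: "{u. blinfun_apply (f2' y) u = 0} = Delta mul y" using C2 by auto
        have "blinfun_apply (f2' y) u = 0"
        proof (rule tangent_lemma[where U=U and q=y and f=f and f'=f' and h=f2 and h'="blinfun_apply (f2' y)" and W=U2 and u=u])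
          show "open U" "y \<in> U" "continuous_on U f'" "f y = 0" "blinfun_apply (f' y) \<noteq> (\<lambda>u. 0)"
            "(f2 has_derivative blinfun_apply (f2' y)) (at y)" "open U2" "y \<in> U2" "blinfun_apply (f' y) u = 0"
            using U(1) y cont der2[OF U2(2)] U2 by auto
          show "(f has_derivative blinfun_apply (f' x)) (at x)" if "x \<in> U" for x using der that .
        next
          fix x assume "x \<in> U2" "x \<in> U" "f x = 0"
          then show "f2 x = 0" using SU SU2 by blast
        qed
        then have "u \<in> Delta mul y" using k2 by blast
        then show ?thesis using Delta_eq[of y] SY yS by blast
      qed
    qed (blast+)
    show ?thesis
      unfolding eventually_at_topological
    proof (intro exI conjI ballI impI)
      show "open (W \<inter> U)" using W(1) U(1) by blast
      show "a' \<in> W \<inter> U" using W(2) U(2) by blast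
      fix x assume "x \<in> W \<inter> U" "x \<noteq> a'" "x \<in> S"
      then show "omega mul a' = omega mul x" using Wc SU by force
    qed
  qed
  show ?thesis by (rule connected_local_const[OF conn a b]) (use loc in blast)
qed

end


theorem lemma4p10:
  fixes mul :: "real^'n \<Rightarrow> real^'n \<Rightarrow> real^'n" and e :: "real^'n"
  assumes "CARD('n) \<ge> 2"
    and "jordan_algebra mul"
    and "semisimple mul"
    and "\<forall>x. mul e x = x"
  shows "{S. maximal_integral_manifold (Delta mul) (Ycomp mul e) S}
       = {{x \<in> Ycomp mul e. omega mul x = c} | c. c > 0}"
proof -
  interpret jalgu mul e
    using assms(2,4) unfolding jordan_algebra_def by unfold_locales auto
  have ss: "semisimple mul" by (rule assms(3))
  show ?thesis unfolding Ycomp_eq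
  proof (rule set_eqI, rule iffI)
    fix S assume "S \<in> {S. maximal_integral_manifold (Delta mul) Y S}"
    then have I: "integral_manifold (Delta mul) Y S"
      and mx: "\<And>S'. integral_manifold (Delta mul) Y S' \<Longrightarrow> S \<subseteq> S' \<Longrightarrow> S' = S"
      unfolding maximal_integral_manifold_def by auto
    have "S \<noteq> {}" "S \<subseteq> Y" using I unfolding integral_manifold_def by auto
    then obtain a where a: "a \<in> S" "a \<in> Y" by auto
    define c where "c = omega mul a"
    have c: "c > 0" unfolding c_def using omega_pos[OF a(2)] .
    have "S \<subseteq> {x \<in> Y. omega mul x = c}"
      using omega_const[OF I a(1)] \<open>S \<subseteq> Y\<close> unfolding c_def by auto
    then have "{x \<in> Y. omega mul x = c} = S" using mx[OF level_integral[OF ss c]] by simp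
    then show "S \<in> {{x \<in> Y. omega mul x = c} | c. c > 0}" using c by blast
  next
    fix S assume "S \<in> {{x \<in> Y. omega mul x = c} | c. c > 0}"
    then obtain c where c: "c > 0" and S: "S = {x \<in> Y. omega mul x = c}" by blast
    have I: "integral_manifold (Delta mul) Y S" unfolding S by (rule level_integral[OF ss c])
    have "S' = S" if I': "integral_manifold (Delta mul) Y S'" and sub: "S \<subseteq> S'" for S'
    proof
      show "S \<subseteq> S'" by (rule sub)
      obtain x0 where x0: "x0 \<in> S" using level_nonempty[OF c] S by blast
      have S'Y: "S' \<subseteq> Y" using I' unfolding integral_manifold_def by auto
      show "S' \<subseteq> S"
      proof
        fix b assume b: "b \<in> S'"
        have "omega mul b = omega mul x0" using omega_const[OF I' b] x0 sub by blast
        then show "b \<in> S" using x0 b S'Y S by auto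
      qed
    qed
    then show "S \<in> {S. maximal_integral_manifold (Delta mul) Y S}"
      using I unfolding maximal_integral_manifold_def by blast
  qed
qed


end
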